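(* For every ordinal $\beta\leq\omega_1$ and every $\alpha<\beta$, in $\mathbb{S}(\beta)$ the fiber $I\times\{\alpha\}$ belongs to $\sigma(\llbracket\mathcal{L}\rrbracket)$.
   Context: An LMP is $(S,\Sigma,\{\tau_a\}_{a\in L})$ with $L$ countable and Markov kernels $\tau_a$. The logic $\mathcal{L}$ has formulas $\phi::=\top\mid\phi\wedge\psi\mid\langle a\rangle_{>q}\phi$ ($a\in L$, $q\in\mathbb{Q}\cap[0,1]$) with $\llbracket\top\rrbracket=S$, $\llbracket\phi\wedge\psi\rrbracket=\llbracket\phi\rrbracket\cap\llbracket\psi\rrbracket$, $\llbracket\langle a\rangle_{>q}\phi\rrbracket=\{s:\tau_a(s,\llbracket\phi\rrbracket)>q\}$; $\sigma(\llbracket\mathcal{L}\rrbracket)$ is the $\sigma$-algebra generated by all $\llbracket\phi\rrbracket$. The processes $\mathbb{S}(\beta)$: $I=(0,1)$, $\mathfrak{m}$ Lebesgue measure, $V\subseteq I$ Lebesgue nonmeasurable, $\mathcal{B}_V=\sigma(\mathcal{B}(I)\cup\{V\})$, and $\mathfrak{m}_0,\mathfrak{m}_1$ measures on $\mathcal{B}_V$ extending $\mathfrak{m}$ with $\mathfrak{m}_0(V)\neq\mathfrak{m}_1(V)$. Let $\{q_n\}_{n\in\omega}$ enumerate $\mathbb{Q}\cap I$. For ordinals $\eta$: $\alpha_n(0)=0$, $\alpha_n(\zeta+1)=\zeta$ for all $n$, and for limit $\lambda$, $(\alpha_n(\lambda))_{n\in\omega}$ is a fixed strictly increasing sequence of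 nonzero ordinals below $\lambda$ cofinal in $\lambda$. For an ordinal $\beta\leq\omega_1$, $\mathbb{S}(\beta)=(I\times\beta,\ \mathcal{B}_V\otimes\mathcal{P}(\beta),\ \{\tau_n\}_{n\in\omega})$ with $\tau_n((x,\eta),A)=x\cdot\mathfrak{m}_0(A_0)$ if $\eta=0$; $=\mathfrak{m}_0(A_{\alpha_n(\eta)})$ if $\eta>0$ and $x<q_n$; $=\mathfrak{m}_1(A_{\alpha_n(\eta)})$ if $\eta>0$ and $x\geq q_n$; here $A_\gamma=\{r:(r,\gamma)\in A\}$. These $\tau_n$ are Markov kernels, so $\mathbb{S}(\beta)$ is an LMP. *)

theory Defs
  imports "HOL-Analysis.Analysis"
begin

text \<open>An ordinal beta is represented by a type 'b of class wellorder (its elements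
are the ordinals alpha < beta).  beta \<le> omega_1 iff every proper initial segment is countable.\<close>

definition ord_zero :: "'b::wellorder" where
  "ord_zero = (LEAST x. True)"

definition is_succ_of :: "'b::wellorder \<Rightarrow> 'b \<Rightarrow> bool" where
  "is_succ_of \<eta> \<zeta> \<longleftrightarrow> \<zeta> < \<eta> \<and> (\<forall>\<xi>. \<not> (\<zeta> < \<xi> \<and> \<xi> < \<eta>))"

definition is_limit :: "'b::wellorder \<Rightarrow> bool" where
  "is_limit l \<longleftrightarrow> l \<noteq> ord_zero \<and> (\<forall>\<zeta>. \<not> is_succ_of l \<zeta>)"

definition alpha_seq :: "(nat \<Rightarrow> 'b::wellorder \<Rightarrow> 'b) \<Rightarrow> bool" where
  "alpha_seq \<alpha> \<longleftrightarrow>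
     (\<forall>n. \<alpha> n ord_zero = ord_zero) \<and>
     (\<forall>n \<eta> \<zeta>. is_succ_of \<eta> \<zeta> \<longrightarrow> \<alpha> n \<eta> = \<zeta>) \<and>
     (\<forall>l. is_limit l \<longrightarrow>
        strict_mono (\<lambda>n. \<alpha> n l) \<and>
        (\<forall>n. ord_zero < \<alpha> n l \<and> \<alpha> n l < l) \<and>
        (\<forall>\<zeta>. \<zeta> < l \<longrightarrow> (\<exists>n. \<zeta> \<le> \<alpha> n l)))"

definition I01 :: "real set" where
  "I01 = {0<..<1}"

definition BV :: "real set \<Rightarrow> real set set" where
  "BV V = sigma_sets I01 (sets (restrict_space borel I01) \<union> {V})"

definition extends_lebesgue :: "real set \<Rightarrow> real measure \<Rightarrow> bool" where
  "extends_lebesgue V M \<longleftrightarrow> space M = I01 \<and> sets M = BV V \<and>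
     (\<forall>A \<in> sets borel. A \<subseteq> I01 \<longrightarrow> emeasure M A = emeasure lborel A)"

definition fiber :: "(real \<times> 'b) set \<Rightarrow> 'b \<Rightarrow> real set" where
  "fiber A \<gamma> = {r. (r, \<gamma>) \<in> A}"

definition tauS :: "real measure \<Rightarrow> real measure \<Rightarrow> (nat \<Rightarrow> real) \<Rightarrow> (nat \<Rightarrow> 'b::wellorder \<Rightarrow> 'b)
    \<Rightarrow> nat \<Rightarrow> real \<times> 'b \<Rightarrow> (real \<times> 'b) set \<Rightarrow> real" where
  "tauS m0 m1 q \<alpha> n s A =
     (let x = fst s; \<eta> = snd s in
      if \<eta> = ord_zero then x * measure m0 (fiber A ord_zero)
      else if x < q n then measure m0 (fiber A (\<alpha> n \<eta>))
      else measure m1 (fiber A (\<alpha> n \<eta>)))"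

datatype frm = FTop | FAnd frm frm | FDia nat rat frm

fun wf_frm :: "frm \<Rightarrow> bool" where
  "wf_frm FTop = True"
| "wf_frm (FAnd f g) = (wf_frm f \<and> wf_frm g)"
| "wf_frm (FDia a q f) = (0 \<le> q \<and> q \<le> 1 \<and> wf_frm f)"

fun sem :: "'s set \<Rightarrow> (nat \<Rightarrow> 's \<Rightarrow> 's set \<Rightarrow> real) \<Rightarrow> frm \<Rightarrow> 's set" where
  "sem S T FTop = S"
| "sem S T (FAnd f g) = sem S T f \<inter> sem S T g"
| "sem S T (FDia a q f) = {s \<in> S. T a s (sem S T f) > real_of_rat q}"

definition sigma_L :: "'s set \<Rightarrow> (nat \<Rightarrow> 's \<Rightarrow> 's set \<Rightarrow> real) \<Rightarrow> 's set set" where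
  "sigma_L S T = sigma_sets S {sem S T f | f. wf_frm f}"

end

theory Submission
  imports Defs
begin

lemma ext_basic:
  assumes "extends_lebesgue V m"
  shows "space m = I01" "sets m = BV V" "emeasure m I01 = 1" "measure m I01 = 1" "finite_measure m"
proof -
  show sp: "space m = I01" "sets m = BV V" using assms by (auto simp: extends_lebesgue_def)
  have "I01 \<in> sets borel" by (simp add: I01_def)
  then show e: "emeasure m I01 = 1" using assms by (simp add: extends_lebesgue_def I01_def)
  then show "measure m I01 = 1" by (simp add: measure_def)
  show "finite_measure m" using e sp by (intro finite_measureI) auto
qed

lemma borel_sub_BV:
  assumes "extends_lebesgue V m" "B \<in> sets borel"
  shows "I01 \<inter> B \<in> sets m"
proof -
  have "I01 \<inter> B \<in> sets (restrict_space borel I01)" using assms(2) by (auto simp: sets_restrict_space)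
  then show ?thesis using ext_basic[OF assms(1)] by (auto simp: BV_def intro: sigma_sets.Basic)
qed

lemma sem_sub: "sem S T f \<subseteq> S"
  by (induction f) auto

lemma tau_x_meas:
  "(\<lambda>x. tauS m0 m1 q \<alpha> n (x,\<gamma>) A) \<in> borel_measurable borel"
proof (cases "\<gamma> = ord_zero")
  case True
  then show ?thesis unfolding tauS_def Let_def by simp
next
  case False
  have "{x::real \<in> space borel. x < q n} \<in> sets borel" by measurable
  then show ?thesis using False unfolding tauS_def Let_def by (auto intro!: measurable_If)
qed

lemma fiber_dia:
  "fiber {s \<in> I01 \<times> UNIV. r < tauS m0 m1 q \<alpha> n s A} \<gamma> = I01 \<inter> {x. r < tauS m0 m1 q \<alpha> n (x,\<gamma>) A}"
  by (auto simp: fiber_def)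

lemma fib_sem:
  assumes "extends_lebesgue V m0"
  shows "fiber (sem (I01 \<times> UNIV) (tauS m0 m1 q \<alpha>) f) \<gamma> \<in> sets m0"
proof (induction f)
  case FTop
  have "fiber (I01 \<times> UNIV) \<gamma> = I01" by (auto simp: fiber_def)
  then show ?case using ext_basic[OF assms] sets.top[of m0] by simp
next
  case (FAnd f g)
  have "fiber (sem (I01 \<times> UNIV) (tauS m0 m1 q \<alpha>) (FAnd f g)) \<gamma> =
     fiber (sem (I01 \<times> UNIV) (tauS m0 m1 q \<alpha>) f) \<gamma> \<inter> fiber (sem (I01 \<times> UNIV) (tauS m0 m1 q \<alpha>) g) \<gamma>"
    by (auto simp: fiber_def)
  then show ?case using FAnd by auto
next
  case (FDia a r f)
  have "{x. real_of_rat r < tauS m0 m1 q \<alpha> a (x,\<gamma>) (sem (I01 \<times> UNIV) (tauS m0 m1 q \<alpha>) f)} \<in> sets borel"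
    using tau_x_meas by measurable
  then show ?case using borel_sub_BV[OF assms] by (simp add: fiber_dia)
qed


lemma measure_compl_I01:
  assumes "extends_lebesgue V m" "F \<in> sets m"
  shows "measure m (I01 - F) = 1 - measure m F"
proof -
  note e = ext_basic[OF assms(1)]
  have "F \<subseteq> I01" using sets.sets_into_space[OF assms(2)] e by simp
  moreover have "I01 \<in> sets m" using sets.top[of m] e by simp
  ultimately show ?thesis using measure_Diff[of m I01 F] e assms(2) by simp
qed

lemma fiber_SS: "fiber (I01 \<times> UNIV) \<gamma> = I01" by (auto simp: fiber_def)
lemma fiber_Diff: "fiber (I01 \<times> UNIV - A) \<gamma> = I01 - fiber A \<gamma>" by (auto simp: fiber_def)
lemma fiber_UN: "fiber (\<Union>i. A i) \<gamma> = (\<Union>i. fiber (A i) \<gamma>)" by (auto simp: fiber_def)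
lemma fiber_empty: "fiber {} \<gamma> = {}" by (auto simp: fiber_def)

context
  fixes V :: "real set" and m0 m1 :: "real measure" and q :: "nat \<Rightarrow> real"
    and \<alpha> :: "nat \<Rightarrow> 'b::wellorder \<Rightarrow> 'b"
  assumes m0: "extends_lebesgue V m0" and m1: "extends_lebesgue V m1"
begin

abbreviation "SS \<equiv> I01 \<times> (UNIV :: 'b set)"
abbreviation "TT \<equiv> tauS m0 m1 q \<alpha>"
abbreviation "GG \<equiv> {sem SS TT f | f. wf_frm f}"
definition "LM = sigma SS GG"

lemma GG_Pow: "GG \<subseteq> Pow SS"
proof
  fix A assume "A \<in> GG"
  then obtain f where "A = sem SS TT f" by blast
  then show "A \<in> Pow SS" using sem_sub[of SS TT f] by simp
qed

lemma sets_ML: "sets LM = sigma_L SS TT"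
  unfolding LM_def sigma_L_def using GG_Pow by (simp add: sets_measure_of)

lemma space_ML: "space LM = SS"
  unfolding LM_def using GG_Pow by (simp add: space_measure_of)

lemma sets_m1: "sets m1 = sets m0" using ext_basic[OF m0] ext_basic[OF m1] by simp

lemma fib_sigma:
  assumes "A \<in> sigma_L SS TT"
  shows "fiber A \<gamma> \<in> sets m0"
  using assms unfolding sigma_L_def
proof (induction rule: sigma_sets.induct)
  case (Basic a)
  then show ?case using fib_sem[OF m0] by auto
next
  case Empty
  then show ?case by (simp add: fiber_empty)
next
  case (Compl a)
  then show ?case using sets.compl_sets[of "fiber a \<gamma>" m0] ext_basic[OF m0]
    by (simp add: fiber_Diff)
next
  case (Union a)
  then show ?case by (simp add: fiber_UN)
qed

lemma tau_bounds:
  assumes "s \<in> SS"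
  shows "0 \<le> TT n s A" "TT n s A \<le> 1"
proof -
  interpret f0: finite_measure m0 using ext_basic[OF m0] by simp
  interpret f1: finite_measure m1 using ext_basic[OF m1] by simp
  have b0: "measure m0 B \<le> 1" for B using f0.bounded_measure[of B] ext_basic[OF m0] by simp
  have b1: "measure m1 B \<le> 1" for B using f1.bounded_measure[of B] ext_basic[OF m1] by simp
  obtain x \<eta> where s: "s = (x,\<eta>)" "0 < x" "x < 1" using assms by (auto simp: I01_def)
  show "0 \<le> TT n s A" using s by (auto simp: tauS_def Let_def)
  have "x * measure m0 B \<le> 1" for B
    using b0[of B] s measure_nonneg[of m0 B] by (simp add: mult_le_one)
  then show "TT n s A \<le> 1" using s b0 b1 by (auto simp: tauS_def Let_def)
qed

lemma basic_meas:
  assumes "wf_frm f"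
  shows "(\<lambda>s. TT n s (sem SS TT f)) \<in> borel_measurable LM"
  unfolding borel_measurable_iff_greater space_ML
proof
  fix a :: real
  let ?A = "sem SS TT f"
  have r: "{w \<in> SS. real_of_rat r < TT n w ?A} \<in> sets LM" for r
  proof -
    consider "r < 0" | "r > 1" | "0 \<le> r \<and> r \<le> 1" by linarith
    then show ?thesis
    proof cases
      case 1
      then have "real_of_rat r < 0" by simp
      then have "{w \<in> SS. real_of_rat r < TT n w ?A} = SS"
      proof -
        have "real_of_rat r < TT n w ?A" if "w \<in> SS" for w
          using tau_bounds(1)[OF that, of n ?A] \<open>real_of_rat r < 0\<close> by linarith
        then show ?thesis by blast
      qed
      then show ?thesis using sets.top[of LM] space_ML by simp
    next
      case 2
      then have "real_of_rat r > 1" by simp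
      then have "{w \<in> SS. real_of_rat r < TT n w ?A} = {}"
      proof -
        have "\<not> real_of_rat r < TT n w ?A" if "w \<in> SS" for w
          using tau_bounds(2)[OF that, of n ?A] \<open>real_of_rat r > 1\<close> by linarith
        then show ?thesis by blast
      qed
      then show ?thesis by (metis sets.empty_sets)
    next
      case 3
      then have "{w \<in> SS. real_of_rat r < TT n w ?A} = sem SS TT (FDia n r f)" by simp
      moreover have "wf_frm (FDia n r f)" using 3 assms by simp
      ultimately have "{w \<in> SS. real_of_rat r < TT n w ?A} \<in> GG" by blast
      then show ?thesis unfolding sets_ML sigma_L_def by (rule sigma_sets.Basic)
    qed
  qed
  have "{w \<in> SS. a < TT n w ?A} = (\<Union>r\<in>{r. a < real_of_rat r}. {w \<in> SS. real_of_rat r < TT n w ?A})"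
  proof (rule set_eqI, rule iffI)
    fix w assume "w \<in> {w \<in> SS. a < TT n w ?A}"
    then obtain r where "a < real_of_rat r" "real_of_rat r < TT n w ?A" "w \<in> SS"
      using of_rat_dense by blast
    then show "w \<in> (\<Union>r\<in>{r. a < real_of_rat r}. {w \<in> SS. real_of_rat r < TT n w ?A})" by blast
  qed auto
  moreover have "(\<Union>r\<in>{r. a < real_of_rat r}. {w \<in> SS. real_of_rat r < TT n w ?A}) \<in> sets LM"
    using r by (intro sets.countable_UN) auto
  ultimately show "{w \<in> SS. a < TT n w ?A} \<in> sets LM" by simp
qed


lemma Int_stable_GG: "Int_stable GG"
  unfolding Int_stable_def
proof (intro ballI)
  fix a b assume "a \<in> GG" "b \<in> GG"
  then obtain f g where "a = sem SS TT f" "wf_frm f" "b = sem SS TT g" "wf_frm g" by blast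
  then have "a \<inter> b = sem SS TT (FAnd f g)" "wf_frm (FAnd f g)" by auto
  then show "a \<inter> b \<in> GG" by blast
qed

lemma tau_sums:
  assumes "disjoint_family A" "\<And>i. A i \<in> sigma_L SS TT"
  shows "(\<lambda>i. TT n s (A i)) sums TT n s (\<Union>i. A i)"
proof -
  obtain x \<eta> where s: "s = (x, \<eta>)" by fastforce
  have F: "range (\<lambda>i. fiber (A i) \<gamma>) \<subseteq> sets m0" "range (\<lambda>i. fiber (A i) \<gamma>) \<subseteq> sets m1" for \<gamma>
    using fib_sigma[OF assms(2)] sets_m1 by auto
  have D: "disjoint_family (\<lambda>i. fiber (A i) \<gamma>)" for \<gamma>
    using assms(1) unfolding disjoint_family_on_def fiber_def by blast
  interpret f0: finite_measure m0 using ext_basic[OF m0] by simp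
  interpret f1: finite_measure m1 using ext_basic[OF m1] by simp
  have S0: "(\<lambda>i. measure m0 (fiber (A i) \<gamma>)) sums measure m0 (fiber (\<Union>i. A i) \<gamma>)" for \<gamma>
    unfolding fiber_UN by (rule measure_UNION[OF F(1) D]) simp
  have S1: "(\<lambda>i. measure m1 (fiber (A i) \<gamma>)) sums measure m1 (fiber (\<Union>i. A i) \<gamma>)" for \<gamma>
    unfolding fiber_UN by (rule measure_UNION[OF F(2) D]) simp
  show ?thesis
    using S0 S1 sums_mult[OF S0, of x] by (simp add: s tauS_def Let_def)
qed

lemma main_meas:
  assumes "A \<in> sigma_L SS TT"
  shows "\<forall>n. (\<lambda>s. TT n s A) \<in> borel_measurable LM"
  using Int_stable_GG GG_Pow assms unfolding sigma_L_def
proof (induction rule: sigma_sets_induct_disjoint)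
  case (basic A)
  then show ?case using basic_meas by blast
next
  case empty
  have "(\<lambda>s. TT n s {}) = (\<lambda>s. 0)" for n by (auto simp: tauS_def Let_def fiber_empty fun_eq_iff)
  then show ?case by simp
next
  case (compl A)
  show ?case
  proof
    fix n
    have A: "A \<in> sigma_L SS TT" using compl unfolding sigma_L_def by simp
    have e: "TT n s (SS - A) = TT n s (sem SS TT FTop) - TT n s A" if "s \<in> SS" for s
    proof -
      have "fiber A \<gamma> \<in> sets m0" "fiber A \<gamma> \<in> sets m1" for \<gamma> using fib_sigma[OF A] sets_m1 by auto
      then have h0: "measure m0 (I01 - fiber A \<gamma>) = 1 - measure m0 (fiber A \<gamma>)"
        and h1: "measure m1 (I01 - fiber A \<gamma>) = 1 - measure m1 (fiber A \<gamma>)" for \<gamma>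
        using measure_compl_I01[OF m0] measure_compl_I01[OF m1] by auto
      show ?thesis using ext_basic(4)[OF m0] ext_basic(4)[OF m1]
        by (simp add: tauS_def Let_def fiber_Diff fiber_SS h0 h1 right_diff_distrib)
    qed
    have "(\<lambda>s. TT n s (sem SS TT FTop) - TT n s A) \<in> borel_measurable LM"
      using basic_meas[of FTop n] compl(2) by (intro borel_measurable_diff) auto
    then show "(\<lambda>s. TT n s (SS - A)) \<in> borel_measurable LM"
      using measurable_cong[of LM "\<lambda>s. TT n s (SS - A)"] e space_ML by auto
  qed
next
  case (union A)
  show ?case
  proof
    fix n
    have A: "\<And>i. A i \<in> sigma_L SS TT" using union unfolding sigma_L_def by auto
    have "(\<lambda>s. TT n s (\<Union>i. A i)) = (\<lambda>s. \<Sum>i. TT n s (A i))"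
      using tau_sums[OF union(1) A] sums_unique by (metis)
    moreover have "(\<lambda>s. \<Sum>i. TT n s (A i)) \<in> borel_measurable LM"
      using union(3) by (intro borel_measurable_suminf) auto
    ultimately show "(\<lambda>s. TT n s (\<Union>i. A i)) \<in> borel_measurable LM" by simp
  qed
qed

lemma dia_closed:
  assumes "A \<in> sigma_L SS TT"
  shows "{s \<in> SS. r < TT n s A} \<in> sigma_L SS TT"
  using main_meas[OF assms] unfolding borel_measurable_iff_greater space_ML sets_ML by blast

lemma ge_closed:
  assumes "A \<in> sigma_L SS TT"
  shows "{s \<in> SS. r \<le> TT n s A} \<in> sigma_L SS TT"
  using main_meas[OF assms] unfolding borel_measurable_iff_ge space_ML sets_ML by blast

lemma sigma_alg_L: "sigma_algebra SS (sigma_L SS TT)"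
  unfolding sigma_L_def using GG_Pow by (rule sigma_algebra_sigma_sets)

end

lemma zero_le: "ord_zero \<le> (x::'b::wellorder)"
  unfolding ord_zero_def by (rule Least_le) simp

lemma alpha_lt:
  assumes alpha: "alpha_seq \<alpha>" and a: "a \<noteq> ord_zero"
  shows "\<alpha> n a < a"
proof (cases "is_limit a")
  case True
  then show ?thesis using alpha unfolding alpha_seq_def by blast
next
  case False
  then obtain \<zeta> where z: "is_succ_of a \<zeta>" using a unfolding is_limit_def by blast
  then have "\<alpha> n a = \<zeta>" using alpha unfolding alpha_seq_def by blast
  then show ?thesis using z unfolding is_succ_of_def by simp
qed

lemma succ_unique:
  assumes "is_succ_of a (z::'b::wellorder)" "is_succ_of b z"
  shows "a = b"
  using assms unfolding is_succ_of_def by (metis linorder_neq_iff)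

lemma alpha_unique:
  assumes alpha: "alpha_seq \<alpha>" and a: "a \<noteq> ord_zero" and b: "b \<noteq> ord_zero"
    and eq: "\<And>n. \<alpha> n b = \<alpha> n a"
  shows "b = a"
proof -
  have A1: "\<And>n \<eta> \<zeta>. is_succ_of \<eta> \<zeta> \<Longrightarrow> \<alpha> n \<eta> = \<zeta>"
    and A2: "\<And>l. is_limit l \<Longrightarrow> strict_mono (\<lambda>n. \<alpha> n l) \<and>
        (\<forall>n. ord_zero < \<alpha> n l \<and> \<alpha> n l < l) \<and> (\<forall>\<zeta>. \<zeta> < l \<longrightarrow> (\<exists>n. \<zeta> \<le> \<alpha> n l))"
    using alpha unfolding alpha_seq_def by blast+
  have nc: "\<alpha> 0 l \<noteq> \<alpha> 1 l" if "is_limit l" for l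
    using A2[OF that] unfolding strict_mono_def by (metis less_numeral_extra(1) order_less_irrefl)
  have le: "x \<le> y" if lx: "is_limit x" and ly: "is_limit y" and exy: "\<And>n. \<alpha> n x = \<alpha> n y" for x y
  proof (rule ccontr)
    assume "\<not> x \<le> y"
    then have "y < x" by simp
    then obtain n where "y \<le> \<alpha> n x" using A2[OF lx] by blast
    moreover have "\<alpha> n y < y" using A2[OF ly] by blast
    ultimately show False using exy[of n] by simp
  qed
  show ?thesis
  proof (cases "is_limit a")
    case la: True
    show ?thesis
    proof (cases "is_limit b")
      case True
      then show ?thesis using le[OF True la] le[OF la True] eq by (metis order_antisym)
    next
      case False
      then obtain z where "is_succ_of b z" using b unfolding is_limit_def by blast
      then have "\<alpha> 0 b = \<alpha> 1 b" using A1 by metis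
      then show ?thesis using nc[OF la] eq by metis
    qed
  next
    case na: False
    then obtain z where za: "is_succ_of a z" using a unfolding is_limit_def by blast
    show ?thesis
    proof (cases "is_limit b")
      case True
      have "\<alpha> 0 a = \<alpha> 1 a" using A1 za by metis
      then show ?thesis using nc[OF True] eq by metis
    next
      case False
      then obtain w where zb: "is_succ_of b w" using b unfolding is_limit_def by blast
      have "w = z" using A1[OF za, of 0] A1[OF zb, of 0] eq[of 0] by simp
      then show ?thesis using succ_unique za zb by metis
    qed
  qed
qed

lemma tau_cyl:
  assumes m0: "extends_lebesgue V m0" and m1: "extends_lebesgue V m1"
  shows "tauS m0 m1 q \<alpha> n (x,\<eta>) (I01 \<times> {\<gamma>}) =
    (if \<eta> = ord_zero then (if \<gamma> = ord_zero then x else 0) else (if \<alpha> n \<eta> = \<gamma> then 1 else 0))"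
proof -
  have f: "fiber (I01 \<times> {\<gamma>}) \<gamma>' = (if \<gamma>' = \<gamma> then I01 else {})" for \<gamma>'
    by (auto simp: fiber_def)
  show ?thesis using ext_basic(4)[OF m0] ext_basic(4)[OF m1]
    by (simp add: tauS_def Let_def f)
qed


lemma fibers_in:
  fixes \<alpha> :: "nat \<Rightarrow> 'b::wellorder \<Rightarrow> 'b" and a :: 'b
  assumes m0: "extends_lebesgue V m0" and m1: "extends_lebesgue V m1" and alpha: "alpha_seq \<alpha>"
  shows "I01 \<times> {a} \<in> sigma_L (I01 \<times> (UNIV :: 'b set)) (tauS m0 m1 q \<alpha>)"
proof (induction a rule: less_induct)
  case (less a)
  let ?S = "I01 \<times> (UNIV :: 'b set)"
  let ?T = "tauS m0 m1 q \<alpha>"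
  let ?L = "sigma_L ?S ?T"
  interpret sa: sigma_algebra ?S ?L using sigma_alg_L[OF m0 m1] .
  have Z: "I01 \<times> {ord_zero} \<in> ?L"
  proof -
    have "{s \<in> ?S. 1 \<le> ?T 0 s ?S} \<in> ?L" using ge_closed[OF m0 m1 sa.top] .
    then have c: "?S - {s \<in> ?S. 1 \<le> ?T 0 s ?S} \<in> ?L" by (rule sa.compl_sets)
    have e: "?S - {s \<in> ?S. 1 \<le> ?T 0 s ?S} = I01 \<times> {ord_zero}"
    proof -
      have "?T 0 (x,\<eta>) ?S = (if \<eta> = ord_zero then x else 1)" for x \<eta>
        using ext_basic(4)[OF m0] ext_basic(4)[OF m1] by (simp add: tauS_def Let_def fiber_SS)
      then show ?thesis by (auto simp: I01_def)
    qed
    show ?thesis using c unfolding e .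
  qed
  show ?case
  proof (cases "a = ord_zero")
    case True
    then show ?thesis using Z by simp
  next
    case False
    have IH: "I01 \<times> {\<alpha> n a} \<in> ?L" for n using less alpha_lt[OF alpha False] by blast
    let ?H = "(\<Inter>n. {s \<in> ?S. 1/2 < ?T n s (I01 \<times> {\<alpha> n a})}) - I01 \<times> {ord_zero}"
    have D: "{s \<in> ?S. 1/2 < ?T n s (I01 \<times> {\<alpha> n a})} \<in> ?L" for n
      by (rule dia_closed[OF m0 m1 IH])
    have "(\<Inter>n. {s \<in> ?S. 1/2 < ?T n s (I01 \<times> {\<alpha> n a})}) \<in> ?L"
      using D by (intro sa.countable_INT) blast+
    then have "?H \<in> ?L" using Z by (rule sa.Diff)
    moreover have "?H = I01 \<times> {a}"
    proof (rule set_eqI)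
      fix s :: "real \<times> 'b"
      obtain x \<eta> where s: "s = (x, \<eta>)" by fastforce
      show "s \<in> ?H \<longleftrightarrow> s \<in> I01 \<times> {a}"
      proof (cases "\<eta> = ord_zero")
        case True
        then show ?thesis using False s by auto
      next
        case ne: False
        have "s \<in> ?H \<longleftrightarrow> x \<in> I01 \<and> (\<forall>n. \<alpha> n \<eta> = \<alpha> n a)"
          using ne s by (simp add: tau_cyl[OF m0 m1])
        also have "\<dots> \<longleftrightarrow> x \<in> I01 \<and> \<eta> = a"
          using alpha_unique[OF alpha False ne] by blast
        finally show ?thesis using s by simp
      qed
    qed
    ultimately show ?thesis by simp
  qed
qed


theorem lemma5p5:
  fixes V :: "real set" and m0 m1 :: "real measure" and q :: "nat \<Rightarrow> real"
    and \<alpha> :: "nat \<Rightarrow> 'b::wellorder \<Rightarrow> 'b" and a :: 'b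
  assumes beta_le_omega1: "\<And>\<eta>::'b. countable {\<zeta>. \<zeta> < \<eta>}"
    and V_sub: "V \<subseteq> I01"
    and V_nonmeas: "V \<notin> sets lebesgue"
    and m0: "extends_lebesgue V m0"
    and m1: "extends_lebesgue V m1"
    and m01: "emeasure m0 V \<noteq> emeasure m1 V"
    and q_enum: "bij_betw q UNIV (\<rat> \<inter> I01)"
    and alpha: "alpha_seq \<alpha>"
  shows "I01 \<times> {a} \<in> sigma_L (I01 \<times> (UNIV :: 'b set)) (tauS m0 m1 q \<alpha>)"
  by (rule fibers_in[OF m0 m1 alpha])

end
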